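(* Let $\Delta$ be a local derivation of $\mathcal{S}$ with $\Delta(L_0)=\Delta(L_1)=0$. Then $\Delta(G_0)=0$.
   Context: $\mathcal{S}$ is the centerless super Virasoro algebra: the Lie superalgebra over $\mathbb{C}$ with basis $\{L_m,G_n: m,n\in\mathbb{Z}\}$, $L_m$ even, $G_n$ odd, and brackets $[L_m,L_n]=(m-n)L_{m+n}$, $[L_m,G_r]=(\frac m2-r)G_{m+r}$, $[G_r,G_s]=2L_{r+s}$. A homogeneous linear map $D$ of parity $|D|$ is a derivation if $D([x,y])=[D(x),y]+(-1)^{|D||x|}[x,D(y)]$ for homogeneous $x,y$; derivations are sums of even and odd ones. A linear map $\Delta:\mathcal{S}\to\mathcal{S}$ is a local derivation if for every $x$ there is a derivation $D_x$ with $\Delta(x)=D_x(x)$. *)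

theory Defs
  imports Complex_Main "HOL-Library.Poly_Mapping"
begin

text \<open>Basis of the centerless super Virasoro algebra: SL m = L_m (even), SG r = G_r (odd).\<close>
datatype sbasis = SL int | SG int

type_synonym svir = "sbasis \<Rightarrow>\<^sub>0 complex"

definition Lb :: "int \<Rightarrow> svir" where "Lb m = Poly_Mapping.single (SL m) 1"
definition Gb :: "int \<Rightarrow> svir" where "Gb r = Poly_Mapping.single (SG r) 1"

definition ssmul :: "complex \<Rightarrow> svir \<Rightarrow> svir" where
  "ssmul c x = Poly_Mapping.map (\<lambda>a. c * a) x"

text \<open>c times the bracket of two basis elements.\<close>
fun bbr :: "complex \<Rightarrow> sbasis \<Rightarrow> sbasis \<Rightarrow> svir" where
  "bbr c (SL m) (SL n) = Poly_Mapping.single (SL (m + n)) (c * of_int (m - n))"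
| "bbr c (SL m) (SG r) = Poly_Mapping.single (SG (m + r)) (c * (of_int m / 2 - of_int r))"
| "bbr c (SG r) (SL m) = Poly_Mapping.single (SG (m + r)) (- c * (of_int m / 2 - of_int r))"
| "bbr c (SG r) (SG s) = Poly_Mapping.single (SL (r + s)) (c * 2)"

definition sbr :: "svir \<Rightarrow> svir \<Rightarrow> svir" where
  "sbr x y = (\<Sum>a\<in>Poly_Mapping.keys x. \<Sum>b\<in>Poly_Mapping.keys y. bbr (Poly_Mapping.lookup x a * Poly_Mapping.lookup y b) a b)"

definition has_parity :: "bool \<Rightarrow> svir \<Rightarrow> bool" where
  "has_parity p x = (if p then Poly_Mapping.keys x \<subseteq> SG ` UNIV else Poly_Mapping.keys x \<subseteq> SL ` UNIV)"

definition clinear_map :: "(svir \<Rightarrow> svir) \<Rightarrow> bool" where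
  "clinear_map D = ((\<forall>x y. D (x + y) = D x + D y) \<and> (\<forall>c x. D (ssmul c x) = ssmul c (D x)))"

definition hom_derivation :: "bool \<Rightarrow> (svir \<Rightarrow> svir) \<Rightarrow> bool" where
  "hom_derivation p D = (clinear_map D \<and>
     (\<forall>q x. has_parity q x \<longrightarrow> has_parity (q \<noteq> p) (D x)) \<and>
     (\<forall>px py x y. has_parity px x \<longrightarrow> has_parity py y \<longrightarrow>
        D (sbr x y) = sbr (D x) y + ssmul (if p \<and> px then -1 else 1) (sbr x (D y))))"

definition is_derivation :: "(svir \<Rightarrow> svir) \<Rightarrow> bool" where
  "is_derivation D = (\<exists>D0 D1. hom_derivation False D0 \<and> hom_derivation True D1 \<and>
     (\<forall>x. D x = D0 x + D1 x))"

definition local_derivation :: "(svir \<Rightarrow> svir) \<Rightarrow> bool" where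
  "local_derivation \<Delta> = (clinear_map \<Delta> \<and> (\<forall>x. \<exists>D. is_derivation D \<and> \<Delta> x = D x))"

end

theory Submission imports Defs begin

lemma lookup_ssmul[simp]: "Poly_Mapping.lookup (ssmul c x) k = c * Poly_Mapping.lookup x k"
  unfolding ssmul_def by (simp add: map.rep_eq when_def)

lemma lookup_sbr: "Poly_Mapping.lookup (sbr x y) k =
  (\<Sum>a\<in>Poly_Mapping.keys x. \<Sum>b\<in>Poly_Mapping.keys y. Poly_Mapping.lookup (bbr (Poly_Mapping.lookup x a * Poly_Mapping.lookup y b) a b) k)"
  unfolding sbr_def by (simp add: lookup_sum)

lemma keys_delta_sum:
  fixes v :: svir
  assumes "\<And>a. a \<in> Poly_Mapping.keys v \<Longrightarrow> f a = (if a = a0 then Poly_Mapping.lookup v a0 * c else 0)"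
  shows "(\<Sum>a\<in>Poly_Mapping.keys v. f a) = Poly_Mapping.lookup v a0 * c"
proof -
  have "(\<Sum>a\<in>Poly_Mapping.keys v. f a) = (\<Sum>a\<in>Poly_Mapping.keys v. if a = a0 then Poly_Mapping.lookup v a0 * c else 0)"
    using assms by (rule sum.cong[OF refl])
  also have "\<dots> = (if a0 \<in> Poly_Mapping.keys v then Poly_Mapping.lookup v a0 * c else 0)"
    by (simp add: sum.delta')
  also have "\<dots> = Poly_Mapping.lookup v a0 * c" by (auto simp: in_keys_iff)
  finally show ?thesis .
qed

lemma lookup_sbr_right: "Poly_Mapping.lookup (sbr v (Poly_Mapping.single b 1)) k =
  (\<Sum>a\<in>Poly_Mapping.keys v. Poly_Mapping.lookup (bbr (Poly_Mapping.lookup v a) a b) k)"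
  by (simp add: lookup_sbr)

lemma lookup_sbr_left: "Poly_Mapping.lookup (sbr (Poly_Mapping.single b 1) v) k =
  (\<Sum>a\<in>Poly_Mapping.keys v. Poly_Mapping.lookup (bbr (Poly_Mapping.lookup v a) b a) k)"
  by (simp add: lookup_sbr)

lemma cRL_L: "Poly_Mapping.lookup (sbr v (Lb n)) (SL k) = Poly_Mapping.lookup v (SL (k-n)) * of_int (k - n - n)"
  unfolding Lb_def lookup_sbr_right
  apply (rule keys_delta_sum) subgoal for a by (cases a) (auto simp: lookup_single when_def algebra_simps) done
lemma single_ssmul: "Poly_Mapping.single k c = ssmul c (Poly_Mapping.single k (1::complex))"
  by (rule poly_mapping_eqI) (simp add: lookup_single when_def)


lemma cRL_G: "Poly_Mapping.lookup (sbr v (Lb n)) (SG k) = Poly_Mapping.lookup v (SG (k-n)) * (-(of_int n / 2 - of_int (k-n)))"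
  unfolding Lb_def lookup_sbr_right
  apply (rule keys_delta_sum) subgoal for a by (cases a) (auto simp: lookup_single when_def algebra_simps) done
lemma cRG_L: "Poly_Mapping.lookup (sbr v (Gb n)) (SL k) = Poly_Mapping.lookup v (SG (k-n)) * 2"
  unfolding Gb_def lookup_sbr_right
  apply (rule keys_delta_sum) subgoal for a by (cases a) (auto simp: lookup_single when_def algebra_simps) done
lemma cRG_G: "Poly_Mapping.lookup (sbr v (Gb n)) (SG k) = Poly_Mapping.lookup v (SL (k-n)) * (of_int (k-n)/2 - of_int n)"
  unfolding Gb_def lookup_sbr_right
  apply (rule keys_delta_sum) subgoal for a by (cases a) (auto simp: lookup_single when_def algebra_simps) done
lemma cLL_L: "Poly_Mapping.lookup (sbr (Lb n) v) (SL k) = Poly_Mapping.lookup v (SL (k-n)) * of_int (n - (k-n))"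
  unfolding Lb_def lookup_sbr_left
  apply (rule keys_delta_sum) subgoal for a by (cases a) (auto simp: lookup_single when_def algebra_simps) done
lemma cLL_G: "Poly_Mapping.lookup (sbr (Lb n) v) (SG k) = Poly_Mapping.lookup v (SG (k-n)) * (of_int n / 2 - of_int (k-n))"
  unfolding Lb_def lookup_sbr_left
  apply (rule keys_delta_sum) subgoal for a by (cases a) (auto simp: lookup_single when_def algebra_simps) done
lemma cLG_L: "Poly_Mapping.lookup (sbr (Gb n) v) (SL k) = Poly_Mapping.lookup v (SG (k-n)) * 2"
  unfolding Gb_def lookup_sbr_left
  apply (rule keys_delta_sum) subgoal for a by (cases a) (auto simp: lookup_single when_def algebra_simps) done
lemma cLG_G: "Poly_Mapping.lookup (sbr (Gb n) v) (SG k) = Poly_Mapping.lookup v (SL (k-n)) * (-(of_int (k-n)/2 - of_int n))"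
  unfolding Gb_def lookup_sbr_left
  apply (rule keys_delta_sum) subgoal for a by (cases a) (auto simp: lookup_single when_def algebra_simps) done

lemma bLL: "sbr (Lb m) (Lb n) = ssmul (of_int (m-n)) (Lb (m+n))"
  unfolding sbr_def Lb_def by (rule poly_mapping_eqI) (simp add: lookup_single when_def algebra_simps)
lemma bLG: "sbr (Lb m) (Gb r) = ssmul (of_int m/2 - of_int r) (Gb (m+r))"
  unfolding sbr_def Lb_def Gb_def by (rule poly_mapping_eqI) (simp add: lookup_single when_def algebra_simps)
lemma bGL: "sbr (Gb r) (Lb m) = ssmul (-(of_int m/2 - of_int r)) (Gb (m+r))"
  unfolding sbr_def Lb_def Gb_def by (rule poly_mapping_eqI) (simp add: lookup_single when_def algebra_simps)
lemma bGG: "sbr (Gb r) (Gb s) = ssmul 2 (Lb (r+s))"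
  unfolding sbr_def Lb_def Gb_def by (rule poly_mapping_eqI) (simp add: lookup_single when_def algebra_simps)


lemma par_L[simp]: "has_parity False (Lb n)" unfolding has_parity_def Lb_def by simp
lemma par_G[simp]: "has_parity True (Gb n)" unfolding has_parity_def Gb_def by simp
lemma par_True_L: "has_parity True v \<Longrightarrow> Poly_Mapping.lookup v (SL k) = 0"
  unfolding has_parity_def by (auto simp: in_keys_iff)
lemma par_False_G: "has_parity False v \<Longrightarrow> Poly_Mapping.lookup v (SG k) = 0"
  unfolding has_parity_def by (auto simp: in_keys_iff)

lemma hd_smul: "hom_derivation p E \<Longrightarrow> E (ssmul c x) = ssmul c (E x)"
  unfolding hom_derivation_def clinear_map_def by blast
lemma hd_add: "hom_derivation p E \<Longrightarrow> E (x + y) = E x + E y"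
  unfolding hom_derivation_def clinear_map_def by blast
lemma hd_par: "hom_derivation p E \<Longrightarrow> has_parity q x \<Longrightarrow> has_parity (q \<noteq> p) (E x)"
  unfolding hom_derivation_def by blast
lemma hd_rule: "hom_derivation p E \<Longrightarrow> has_parity px x \<Longrightarrow> has_parity py y \<Longrightarrow>
   E (sbr x y) = sbr (E x) y + ssmul (if p \<and> px then -1 else 1) (sbr x (E y))"
  unfolding hom_derivation_def by blast

lemma E0_L_G: "hom_derivation False E \<Longrightarrow> Poly_Mapping.lookup (E (Lb n)) (SG k) = 0"
  using hd_par[of False E False "Lb n"] par_False_G by simp
lemma E0_G_L: "hom_derivation False E \<Longrightarrow> Poly_Mapping.lookup (E (Gb n)) (SL k) = 0"
  using hd_par[of False E True "Gb n"] par_True_L by simp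
lemma E1_L_L: "hom_derivation True E \<Longrightarrow> Poly_Mapping.lookup (E (Lb n)) (SL k) = 0"
  using hd_par[of True E False "Lb n"] par_True_L by simp
lemma E1_G_G: "hom_derivation True E \<Longrightarrow> Poly_Mapping.lookup (E (Gb n)) (SG k) = 0"
  using hd_par[of True E True "Gb n"] par_False_G by simp

lemmas cf = cRL_L cRL_G cRG_L cRG_G cLL_L cLL_G cLG_L cLG_G
lemmas bb = bLL bLG bGL bGG

lemma hd_L0_L: assumes "hom_derivation p E"
  shows "(of_int n - of_int i) * Poly_Mapping.lookup (E (Lb i)) (SL n) = Poly_Mapping.lookup (sbr (E (Lb 0)) (Lb i)) (SL n)"
proof -
  have "E (sbr (Lb 0) (Lb i)) = sbr (E (Lb 0)) (Lb i) + ssmul 1 (sbr (Lb 0) (E (Lb i)))"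
    using hd_rule[OF assms, of False "Lb 0" False "Lb i"] by simp
  then have "Poly_Mapping.lookup (E (sbr (Lb 0) (Lb i))) (SL n) = Poly_Mapping.lookup (sbr (E (Lb 0)) (Lb i)) (SL n) + Poly_Mapping.lookup (sbr (Lb 0) (E (Lb i))) (SL n)"
    by (simp add: lookup_add)
  then show ?thesis by (simp add: bb hd_smul[OF assms] cLL_L algebra_simps)
qed


lemma hd_L0_gen: assumes "hom_derivation p E" "has_parity q e" "sbr (Lb 0) e = ssmul (- of_int i) e"
   "\<And>w. Poly_Mapping.lookup (sbr (Lb 0) w) b = - of_int n * Poly_Mapping.lookup w b"
  shows "(of_int n - of_int i) * Poly_Mapping.lookup (E e) b = Poly_Mapping.lookup (sbr (E (Lb 0)) e) b"
proof -
  have "E (sbr (Lb 0) e) = sbr (E (Lb 0)) e + ssmul 1 (sbr (Lb 0) (E e))"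
    using hd_rule[OF assms(1), of False "Lb 0" q e] assms(2) by simp
  then have "Poly_Mapping.lookup (E (sbr (Lb 0) e)) b = Poly_Mapping.lookup (sbr (E (Lb 0)) e) b + Poly_Mapping.lookup (sbr (Lb 0) (E e)) b"
    by (simp add: lookup_add)
  then show ?thesis using assms(3,4) by (simp add: hd_smul[OF assms(1)] algebra_simps)
qed

lemma sbr_add_left_L: "sbr (v1 + v2) (Lb i) = sbr v1 (Lb i) + sbr v2 (Lb i)"
  apply (rule poly_mapping_eqI) subgoal for k by (cases k) (simp_all add: lookup_add cf algebra_simps) done
lemma sbr_add_left_G: "sbr (v1 + v2) (Gb i) = sbr v1 (Gb i) + sbr v2 (Gb i)"
  apply (rule poly_mapping_eqI) subgoal for k by (cases k) (simp_all add: lookup_add cf algebra_simps) done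

lemma der_decomp: "is_derivation D \<Longrightarrow> (\<exists>D0 D1. hom_derivation False D0 \<and> hom_derivation True D1 \<and> (\<forall>x. D x = D0 x + D1 x))"
  unfolding is_derivation_def by blast

lemma ssmul_add: "ssmul c (x + y) = ssmul c x + ssmul c y"
  by (rule poly_mapping_eqI) (simp add: lookup_add algebra_simps)

lemma der_add: assumes "is_derivation D" shows "D (x + y) = D x + D y"
proof -
  obtain D0 D1 where d: "hom_derivation False D0" "hom_derivation True D1" "\<And>x. D x = D0 x + D1 x"
    using der_decomp[OF assms(1)] by blast
  show ?thesis by (simp add: d(3) hd_add[OF d(1)] hd_add[OF d(2)] algebra_simps)
qed
lemma der_smul: assumes "is_derivation D" shows "D (ssmul c x) = ssmul c (D x)"
proof -
  obtain D0 D1 where d: "hom_derivation False D0" "hom_derivation True D1" "\<And>x. D x = D0 x + D1 x"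
    using der_decomp[OF assms(1)] by blast
  show ?thesis by (simp add: d(3) hd_smul[OF d(1)] hd_smul[OF d(2)] ssmul_add)
qed

lemma sbr_L0_L: "Poly_Mapping.lookup (sbr (Lb 0) w) (SL n) = - of_int n * Poly_Mapping.lookup w (SL n)"
  by (simp add: cLL_L)
lemma sbr_L0_G: "Poly_Mapping.lookup (sbr (Lb 0) w) (SG n) = - of_int n * Poly_Mapping.lookup w (SG n)"
  by (simp add: cLL_G)

lemma der_L0: assumes "is_derivation D" "e = Lb i \<or> e = Gb i" "b = SL n \<or> b = SG n"
  shows "(of_int n - of_int i) * Poly_Mapping.lookup (D e) b = Poly_Mapping.lookup (sbr (D (Lb 0)) e) b"
proof -
  obtain D0 D1 where d: "hom_derivation False D0" "hom_derivation True D1" "\<And>x. D x = D0 x + D1 x"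
    using der_decomp[OF assms(1)] by blast
  have par: "has_parity False e \<or> has_parity True e" using assms(2) by auto
  have br: "sbr (Lb 0) e = ssmul (- of_int i) e" using assms(2) by (auto simp: bb)
  have lk: "\<And>w. Poly_Mapping.lookup (sbr (Lb 0) w) b = - of_int n * Poly_Mapping.lookup w b"
    using assms(3) sbr_L0_L sbr_L0_G by auto
  have h0: "(of_int n - of_int i) * Poly_Mapping.lookup (D0 e) b = Poly_Mapping.lookup (sbr (D0 (Lb 0)) e) b"
    using par hd_L0_gen[OF d(1) _ br lk] by blast
  have h1: "(of_int n - of_int i) * Poly_Mapping.lookup (D1 e) b = Poly_Mapping.lookup (sbr (D1 (Lb 0)) e) b"
    using par hd_L0_gen[OF d(2) _ br lk] by blast
  have "sbr (D (Lb 0)) e = sbr (D0 (Lb 0)) e + sbr (D1 (Lb 0)) e"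
    using assms(2) d(3) sbr_add_left_L sbr_add_left_G by auto
  then show ?thesis using h0 h1 d(3) by (simp add: lookup_add algebra_simps)
qed


abbreviation lk where "lk \<equiv> Poly_Mapping.lookup"

lemma rel: assumes "hom_derivation p E" "has_parity px x" "has_parity py y"
  shows "lk (E (sbr x y)) b = lk (sbr (E x) y) b + (if p \<and> px then -1 else 1) * lk (sbr x (E y)) b"
  using hd_rule[OF assms] by (simp add: lookup_add)

lemma odd_deg0: assumes E: "hom_derivation True E"
  shows "lk (E (Gb 1)) (SL 1) = lk (E (Gb 0)) (SL 0)"
    and "lk (E (Lb 1)) (SG 1) = - lk (E (Gb 0)) (SL 0) / 4"
proof -
  note s = bb hd_smul[OF E] cf E1_L_L[OF E] E1_G_G[OF E]
  have 1: "lk (E (sbr (Gb 0) (Gb (-1)))) (SG (-1)) = lk (sbr (E (Gb 0)) (Gb (-1))) (SG (-1)) - lk (sbr (Gb 0) (E (Gb (-1)))) (SG (-1))"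
    using rel[OF E, of True "Gb 0" True "Gb (-1)"] by simp
  have 2: "lk (E (sbr (Gb 1) (Lb (-1)))) (SL 0) = lk (sbr (E (Gb 1)) (Lb (-1))) (SL 0) - lk (sbr (Gb 1) (E (Lb (-1)))) (SL 0)"
    using rel[OF E, of True "Gb 1" False "Lb (-1)"] by simp
  have 3: "lk (E (sbr (Gb 1) (Gb (-1)))) (SG 0) = lk (sbr (E (Gb 1)) (Gb (-1))) (SG 0) - lk (sbr (Gb 1) (E (Gb (-1)))) (SG 0)"
    using rel[OF E, of True "Gb 1" True "Gb (-1)"] by simp
  have 4: "lk (E (sbr (Gb 1) (Gb 0))) (SG 1) = lk (sbr (E (Gb 1)) (Gb 0)) (SG 1) - lk (sbr (Gb 1) (E (Gb 0))) (SG 1)"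
    using rel[OF E, of True "Gb 1" True "Gb 0"] by simp
  have 5: "lk (E (sbr (Gb 0) (Gb 0))) (SG 0) = lk (sbr (E (Gb 0)) (Gb 0)) (SG 0) - lk (sbr (Gb 0) (E (Gb 0))) (SG 0)"
    using rel[OF E, of True "Gb 0" True "Gb 0"] by simp
  define c0 where "c0 = lk (E (Gb 0)) (SL 0)"
  define c1 where "c1 = lk (E (Gb 1)) (SL 1)"
  define cm where "cm = lk (E (Gb (-1))) (SL (-1))"
  define b0 where "b0 = lk (E (Lb 0)) (SG 0)"
  define b1 where "b1 = lk (E (Lb 1)) (SG 1)"
  define bm where "bm = lk (E (Lb (-1))) (SG (-1))"
  have e1: "2 * bm = c0 - cm / 2" using 1 by (simp add: s c0_def cm_def bm_def)
  have e2: "3/2 * c0 = 2 * c1 - 2 * bm" using 2 by (simp add: s c0_def c1_def bm_def)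
  have e3: "2 * b0 = 3/2 * c1 - 3/2 * cm" using 3 by (simp add: s c1_def cm_def b0_def algebra_simps)
  have e4: "2 * b1 = c1 / 2 - c0" using 4 by (simp add: s c0_def c1_def b1_def)
  have e5: "b0 = 0" using 5 by (simp add: s b0_def)
  have "cm = c1" using e3 e5 by simp
  then have a: "c1 + bm * 4 = c0 * 2" and b: "c0 * 3 + bm * 4 = c1 * 4" using e1 e2 by (simp_all add: field_simps)
  have "(c0 * 3 + bm * 4) - (c1 + bm * 4) = c1 * 4 - c0 * 2" using a b by simp
  then have "c1 = c0" by (simp add: algebra_simps)
  then show "lk (E (Gb 1)) (SL 1) = lk (E (Gb 0)) (SL 0)" by (simp add: c0_def c1_def)
  show "lk (E (Lb 1)) (SG 1) = - lk (E (Gb 0)) (SL 0) / 4" using e4 \<open>c1 = c0\<close> by (simp add: c0_def b1_def field_simps)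
qed


lemma even_deg0: assumes E: "hom_derivation False E"
  shows "lk (E (Gb 0)) (SG 0) = 0" and "lk (E (Lb 1)) (SL 1) = lk (E (Gb 1)) (SG 1)"
proof -
  note s = bb hd_smul[OF E] cf E0_L_G[OF E] E0_G_L[OF E]
  have 1: "lk (E (sbr (Gb 1) (Lb 0))) (SG 1) = lk (sbr (E (Gb 1)) (Lb 0)) (SG 1) + lk (sbr (Gb 1) (E (Lb 0))) (SG 1)"
    using rel[OF E, of True "Gb 1" False "Lb 0"] by simp
  have 2: "lk (E (sbr (Gb 1) (Gb 0))) (SL 1) = lk (sbr (E (Gb 1)) (Gb 0)) (SL 1) + lk (sbr (Gb 1) (E (Gb 0))) (SL 1)"
    using rel[OF E, of True "Gb 1" True "Gb 0"] by simp
  have 3: "lk (E (sbr (Gb 0) (Gb 0))) (SL 0) = lk (sbr (E (Gb 0)) (Gb 0)) (SL 0) + lk (sbr (Gb 0) (E (Gb 0))) (SL 0)"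
    using rel[OF E, of True "Gb 0" True "Gb 0"] by simp
  define a0 where "a0 = lk (E (Lb 0)) (SL 0)"
  define a1 where "a1 = lk (E (Lb 1)) (SL 1)"
  define d0 where "d0 = lk (E (Gb 0)) (SG 0)"
  define d1 where "d1 = lk (E (Gb 1)) (SG 1)"
  have e1: "a0 = 0" using 1 by (simp add: s a0_def algebra_simps)
  have e2: "2 * a1 = 2 * d1 + 2 * d0" using 2 by (simp add: s a1_def d0_def d1_def algebra_simps)
  have e3: "2 * a0 = 4 * d0" using 3 by (simp add: s a0_def d0_def algebra_simps)
  have "d0 = 0" using e1 e3 by simp
  then show "lk (E (Gb 0)) (SG 0) = 0" by (simp add: d0_def)
  show "lk (E (Lb 1)) (SL 1) = lk (E (Gb 1)) (SG 1)" using e2 \<open>d0 = 0\<close> by (simp add: a1_def d1_def)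
qed


lemma der_deg0: assumes "is_derivation D"
  shows "lk (D (Gb 0)) (SG 0) = 0"
    and "lk (D (Gb 1)) (SL 1) = lk (D (Gb 0)) (SL 0)"
    and "lk (D (Lb 1)) (SG 1) = - lk (D (Gb 0)) (SL 0) / 4"
    and "lk (D (Lb 1)) (SL 1) = lk (D (Gb 1)) (SG 1)"
proof -
  obtain D0 D1 where d: "hom_derivation False D0" "hom_derivation True D1" "\<And>x. D x = D0 x + D1 x"
    using der_decomp[OF assms(1)] by blast
  note z = E0_L_G[OF d(1)] E0_G_L[OF d(1)] E1_L_L[OF d(2)] E1_G_G[OF d(2)]
  show "lk (D (Gb 0)) (SG 0) = 0" using even_deg0(1)[OF d(1)] by (simp add: d(3) lookup_add z)
  show "lk (D (Gb 1)) (SL 1) = lk (D (Gb 0)) (SL 0)" using odd_deg0(1)[OF d(2)] by (simp add: d(3) lookup_add z)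
  show "lk (D (Lb 1)) (SG 1) = - lk (D (Gb 0)) (SL 0) / 4" using odd_deg0(2)[OF d(2)] by (simp add: d(3) lookup_add z)
  show "lk (D (Lb 1)) (SL 1) = lk (D (Gb 1)) (SG 1)" using even_deg0(2)[OF d(1)] by (simp add: d(3) lookup_add z)
qed

lemma ld_add: "local_derivation \<Delta> \<Longrightarrow> \<Delta> (x + y) = \<Delta> x + \<Delta> y"
  unfolding local_derivation_def clinear_map_def by blast
lemma ld_smul: "local_derivation \<Delta> \<Longrightarrow> \<Delta> (ssmul c x) = ssmul c (\<Delta> x)"
  unfolding local_derivation_def clinear_map_def by blast
lemma ld_loc: "local_derivation \<Delta> \<Longrightarrow> \<exists>D. is_derivation D \<and> \<Delta> x = D x"
  unfolding local_derivation_def by blast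

lemma factA: assumes ld: "local_derivation \<Delta>" and L0: "\<Delta> (Lb 0) = 0" and t: "t^2 = of_int n" and n: "n \<noteq> 0"
  shows "of_int n * lk (\<Delta> (Gb 0)) (SL n) = 2 * t * lk (\<Delta> (Gb 0)) (SG n)"
proof -
  define x where "x = Lb 0 + ssmul t (Gb 0)"
  obtain D where D: "is_derivation D" "\<Delta> x = D x" using ld_loc[OF ld] by blast
  have dx: "D x = D (Lb 0) + ssmul t (D (Gb 0))" by (simp add: x_def der_add[OF D(1)] der_smul[OF D(1)])
  have Dx: "\<Delta> x = ssmul t (\<Delta> (Gb 0))" by (simp add: x_def ld_add[OF ld] ld_smul[OF ld] L0)
  define v where "v = D (Lb 0)"
  define zL where "zL = lk (\<Delta> (Gb 0)) (SL n)"
  define zG where "zG = lk (\<Delta> (Gb 0)) (SG n)"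
  define vL where "vL = lk v (SL n)"
  define vG where "vG = lk v (SG n)"
  have q1: "of_int n * lk (D (Lb 0)) (SL n) = of_int n * vL"
    using der_L0[OF D(1), of "Lb 0" 0 "SL n" n] by (simp add: cf v_def vL_def)
  have q2: "of_int n * lk (D (Gb 0)) (SL n) = 2 * vG"
    using der_L0[OF D(1), of "Gb 0" 0 "SL n" n] by (simp add: cf v_def vG_def)
  have q3: "of_int n * lk (D (Lb 0)) (SG n) = of_int n * vG"
    using der_L0[OF D(1), of "Lb 0" 0 "SG n" n] by (simp add: cf v_def vG_def)
  have q4: "of_int n * lk (D (Gb 0)) (SG n) = of_int n / 2 * vL"
    using der_L0[OF D(1), of "Gb 0" 0 "SG n" n] by (simp add: cf v_def vL_def)
  have eL: "t * zL = lk (D (Lb 0)) (SL n) + t * lk (D (Gb 0)) (SL n)"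
    using arg_cong[OF D(2)[unfolded dx Dx], of "\<lambda>w. lk w (SL n)"] by (simp add: lookup_add zL_def)
  have eG: "t * zG = lk (D (Lb 0)) (SG n) + t * lk (D (Gb 0)) (SG n)"
    using arg_cong[OF D(2)[unfolded dx Dx], of "\<lambda>w. lk w (SG n)"] by (simp add: lookup_add zG_def)
  have fL: "of_int n * t * zL = of_int n * vL + 2 * t * vG"
  proof -
    have "of_int n * t * zL = of_int n * (t * zL)" by (simp add: mult.assoc)
    also have "\<dots> = of_int n * (lk (D (Lb 0)) (SL n) + t * lk (D (Gb 0)) (SL n))" using eL by simp
    also have "\<dots> = of_int n * lk (D (Lb 0)) (SL n) + t * (of_int n * lk (D (Gb 0)) (SL n))" by (simp add: algebra_simps)
    finally have "of_int n * t * zL = of_int n * lk (D (Lb 0)) (SL n) + t * (of_int n * lk (D (Gb 0)) (SL n))" .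
    then show ?thesis by (simp only: q1 q2; simp add: algebra_simps)
  qed
  have fG: "of_int n * t * zG = of_int n * vG + t * (of_int n / 2) * vL"
  proof -
    have "of_int n * t * zG = of_int n * (t * zG)" by (simp add: mult.assoc)
    also have "\<dots> = of_int n * (lk (D (Lb 0)) (SG n) + t * lk (D (Gb 0)) (SG n))" using eG by simp
    also have "\<dots> = of_int n * lk (D (Lb 0)) (SG n) + t * (of_int n * lk (D (Gb 0)) (SG n))" by (simp add: algebra_simps)
    finally have "of_int n * t * zG = of_int n * lk (D (Lb 0)) (SG n) + t * (of_int n * lk (D (Gb 0)) (SG n))" .
    then show ?thesis by (simp only: q3 q4; simp add: algebra_simps)
  qed
  have "of_int n * t * (of_int n * zL - 2 * t * zG) = of_int n * (of_int n * t * zL) - 2 * t * (of_int n * t * zG)"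
    by (simp add: algebra_simps)
  also have "\<dots> = of_int n * (of_int n * vL + 2 * t * vG) - 2 * t * (of_int n * vG + t * (of_int n / 2) * vL)"
    by (simp only: fL fG)
  also have "\<dots> = of_int n * (of_int n - t^2) * vL" by (simp add: algebra_simps power2_eq_square)
  also have "\<dots> = 0" using t by simp
  finally have "of_int n * t * (of_int n * zL - 2 * t * zG) = 0" .
  moreover have "t \<noteq> 0" using t n by auto
  ultimately show ?thesis using n by (simp add: zL_def zG_def)
qed


lemma factA2: assumes ld: "local_derivation \<Delta>" and L0: "\<Delta> (Lb 0) = 0" and n: "n \<noteq> 0"
  shows "lk (\<Delta> (Gb 0)) (SL n) = 0 \<and> lk (\<Delta> (Gb 0)) (SG n) = 0"
proof -
  define t where "t = csqrt (of_int n)"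
  have t2: "t^2 = of_int n" "(-t)^2 = of_int n" by (simp_all add: t_def)
  have "t \<noteq> 0" using n t2(1) by auto
  have a: "of_int n * lk (\<Delta> (Gb 0)) (SL n) = 2 * t * lk (\<Delta> (Gb 0)) (SG n)" by (rule factA[OF ld L0 t2(1) n])
  have b: "of_int n * lk (\<Delta> (Gb 0)) (SL n) = 2 * (-t) * lk (\<Delta> (Gb 0)) (SG n)" by (rule factA[OF ld L0 t2(2) n])
  have "2 * t * lk (\<Delta> (Gb 0)) (SG n) - 2 * (-t) * lk (\<Delta> (Gb 0)) (SG n) = 0" using a b by simp
  then have "4 * t * lk (\<Delta> (Gb 0)) (SG n) = 0" by simp
  then have g: "lk (\<Delta> (Gb 0)) (SG n) = 0" using \<open>t \<noteq> 0\<close> by simp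
  then show ?thesis using a n by simp
qed

lemma factC: assumes ld: "local_derivation \<Delta>" and L1: "\<Delta> (Lb 1) = 0"
   and t: "t^2 = (of_int n - 2) * (of_int n - 3/2) / (of_int n - 3)" and n: "n \<noteq> 1" "n \<noteq> 2" "n \<noteq> 3"
  shows "(of_int n - 3/2) * lk (\<Delta> (Gb 1)) (SL n) = 2 * t * lk (\<Delta> (Gb 1)) (SG n)"
proof -
  define x where "x = Lb 1 + ssmul t (Gb 1)"
  obtain D where D: "is_derivation D" "\<Delta> x = D x" using ld_loc[OF ld] by blast
  have dx: "D x = D (Lb 1) + ssmul t (D (Gb 1))" by (simp add: x_def der_add[OF D(1)] der_smul[OF D(1)])
  have Dx: "\<Delta> x = ssmul t (\<Delta> (Gb 1))" by (simp add: x_def ld_add[OF ld] ld_smul[OF ld] L1)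
  define v where "v = D (Lb 0)"
  define N where "N = (of_int n - 1 :: complex)"
  define zL where "zL = lk (\<Delta> (Gb 1)) (SL n)"
  define zG where "zG = lk (\<Delta> (Gb 1)) (SG n)"
  define vL where "vL = lk v (SL (n-1))"
  define vG where "vG = lk v (SG (n-1))"
  have q1: "N * lk (D (Lb 1)) (SL n) = (N - 1) * vL"
    using der_L0[OF D(1), of "Lb 1" 1 "SL n" n] by (simp add: cf v_def vL_def N_def algebra_simps)
  have q2: "N * lk (D (Gb 1)) (SL n) = 2 * vG"
    using der_L0[OF D(1), of "Gb 1" 1 "SL n" n] by (simp add: cf v_def vG_def N_def)
  have q3: "N * lk (D (Lb 1)) (SG n) = (N - 1/2) * vG"
    using der_L0[OF D(1), of "Lb 1" 1 "SG n" n] by (simp add: cf v_def vG_def N_def algebra_simps)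
  have q4: "N * lk (D (Gb 1)) (SG n) = (N / 2 - 1) * vL"
    using der_L0[OF D(1), of "Gb 1" 1 "SG n" n] by (simp add: cf v_def vL_def N_def algebra_simps)
  have eL: "t * zL = lk (D (Lb 1)) (SL n) + t * lk (D (Gb 1)) (SL n)"
    using arg_cong[OF D(2)[unfolded dx Dx], of "\<lambda>w. lk w (SL n)"] by (simp add: lookup_add zL_def)
  have eG: "t * zG = lk (D (Lb 1)) (SG n) + t * lk (D (Gb 1)) (SG n)"
    using arg_cong[OF D(2)[unfolded dx Dx], of "\<lambda>w. lk w (SG n)"] by (simp add: lookup_add zG_def)
  have fL: "N * t * zL = (N - 1) * vL + 2 * t * vG"
  proof -
    have "N * t * zL = N * (t * zL)" by (simp add: mult.assoc)
    also have "\<dots> = N * (lk (D (Lb 1)) (SL n) + t * lk (D (Gb 1)) (SL n))" using eL by simp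
    also have "\<dots> = N * lk (D (Lb 1)) (SL n) + t * (N * lk (D (Gb 1)) (SL n))" by (simp add: algebra_simps)
    finally have "N * t * zL = N * lk (D (Lb 1)) (SL n) + t * (N * lk (D (Gb 1)) (SL n))" .
    then show ?thesis by (simp only: q1 q2; simp add: algebra_simps)
  qed
  have fG: "N * t * zG = (N - 1/2) * vG + t * (N/2 - 1) * vL"
  proof -
    have "N * t * zG = N * (t * zG)" by (simp add: mult.assoc)
    also have "\<dots> = N * (lk (D (Lb 1)) (SG n) + t * lk (D (Gb 1)) (SG n))" using eG by simp
    also have "\<dots> = N * lk (D (Lb 1)) (SG n) + t * (N * lk (D (Gb 1)) (SG n))" by (simp add: algebra_simps)
    finally have "N * t * zG = N * lk (D (Lb 1)) (SG n) + t * (N * lk (D (Gb 1)) (SG n))" .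
    then show ?thesis by (simp only: q3 q4; simp add: algebra_simps)
  qed
  have n3: "(of_int n - 3 :: complex) \<noteq> 0"
  proof -
    have "(of_int n - 3 :: complex) = of_int (n - 3)" by simp
    moreover have "n - 3 \<noteq> 0" using n(3) by simp
    ultimately show ?thesis by (metis of_int_eq_0_iff)
  qed
  have N2: "N - 2 = of_int n - 3" "N - 1 = of_int n - 2" "N - 1/2 = of_int n - 3/2" by (simp_all add: N_def)
  have tt: "t^2 * (N - 2) = (N - 1) * (N - 1/2)"
    unfolding N2 t using n3 by simp
  have "N * t * ((N - 1/2) * zL - 2 * t * zG) = (N - 1/2) * (N * t * zL) - 2 * t * (N * t * zG)"
    by (simp add: algebra_simps)
  also have "\<dots> = (N - 1/2) * ((N - 1) * vL + 2 * t * vG) - 2 * t * ((N - 1/2) * vG + t * (N/2 - 1) * vL)"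
    by (simp only: fL fG)
  also have "\<dots> = ((N - 1) * (N - 1/2) - t^2 * (N - 2)) * vL" by (simp add: field_simps power2_eq_square)
  also have "\<dots> = 0" using tt by simp
  finally have *: "N * t * ((N - 1/2) * zL - 2 * t * zG) = 0" .
  have N0: "N \<noteq> 0" using n(1) by (simp add: N_def)
  have h2: "(of_int n - 2 :: complex) \<noteq> 0"
  proof -
    have "(of_int n - 2 :: complex) = of_int (n - 2)" by simp
    moreover have "n - 2 \<noteq> 0" using n(2) by simp
    ultimately show ?thesis by (metis of_int_eq_0_iff)
  qed
  have h32: "(of_int n - 3/2 :: complex) \<noteq> 0"
  proof
    assume "(of_int n - 3/2 :: complex) = 0"
    then have "complex_of_int (2 * n) = of_int 3" by (simp add: field_simps)
    then have "2 * n = 3" using of_int_eq_iff by blast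
    then show False by presburger
  qed
  have "(N - 1) * (N - 1/2) \<noteq> 0" unfolding N2 using h2 h32 by simp
  then have "t \<noteq> 0" using tt by auto
  with * N0 have "(N - 1/2) * zL - 2 * t * zG = 0" by simp
  then show ?thesis unfolding N2 zL_def zG_def by simp
qed


lemma factC2: assumes ld: "local_derivation \<Delta>" and L1: "\<Delta> (Lb 1) = 0" and n: "n \<noteq> 1" "n \<noteq> 2" "n \<noteq> 3"
  shows "lk (\<Delta> (Gb 1)) (SL n) = 0"
proof -
  define t where "t = csqrt ((of_int n - 2) * (of_int n - 3/2) / (of_int n - 3))"
  have t2: "t^2 = (of_int n - 2) * (of_int n - 3/2) / (of_int n - 3)"
     "(-t)^2 = (of_int n - 2) * (of_int n - 3/2) / (of_int n - 3)" by (simp_all add: t_def)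
  have a: "(of_int n - 3/2) * lk (\<Delta> (Gb 1)) (SL n) = 2 * t * lk (\<Delta> (Gb 1)) (SG n)" by (rule factC[OF ld L1 t2(1) n])
  have b: "(of_int n - 3/2) * lk (\<Delta> (Gb 1)) (SL n) = 2 * (-t) * lk (\<Delta> (Gb 1)) (SG n)" by (rule factC[OF ld L1 t2(2) n])
  have "(of_int n - 3/2) * lk (\<Delta> (Gb 1)) (SL n) + (of_int n - 3/2) * lk (\<Delta> (Gb 1)) (SL n)
     = 2 * t * lk (\<Delta> (Gb 1)) (SG n) + 2 * (-t) * lk (\<Delta> (Gb 1)) (SG n)" using a b by simp
  also have "\<dots> = 0" by simp
  finally have "2 * ((of_int n - 3/2) * lk (\<Delta> (Gb 1)) (SL n)) = 0" by (simp only: mult_2)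
  moreover have "(of_int n - 3/2 :: complex) \<noteq> 0"
  proof
    assume "(of_int n - 3/2 :: complex) = 0"
    then have "complex_of_int (2 * n) = of_int 3" by (simp add: field_simps)
    then have "2 * n = 3" using of_int_eq_iff by blast
    then show False by presburger
  qed
  ultimately show ?thesis by simp
qed

lemma factC1a: assumes ld: "local_derivation \<Delta>" and L1: "\<Delta> (Lb 1) = 0" and t: "t^2 = -1/4"
  shows "t * lk (\<Delta> (Gb 1)) (SL 1) = lk (\<Delta> (Gb 1)) (SG 1)"
proof -
  define x where "x = Lb 1 + ssmul t (Gb 1)"
  obtain D where D: "is_derivation D" "\<Delta> x = D x" using ld_loc[OF ld] by blast
  have dx: "D x = D (Lb 1) + ssmul t (D (Gb 1))" by (simp add: x_def der_add[OF D(1)] der_smul[OF D(1)])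
  have Dx: "\<Delta> x = ssmul t (\<Delta> (Gb 1))" by (simp add: x_def ld_add[OF ld] ld_smul[OF ld] L1)
  have eL: "t * lk (\<Delta> (Gb 1)) (SL 1) = lk (D (Lb 1)) (SL 1) + t * lk (D (Gb 1)) (SL 1)"
    using arg_cong[OF D(2)[unfolded dx Dx], of "\<lambda>w. lk w (SL 1)"] by (simp add: lookup_add)
  have eG: "t * lk (\<Delta> (Gb 1)) (SG 1) = lk (D (Lb 1)) (SG 1) + t * lk (D (Gb 1)) (SG 1)"
    using arg_cong[OF D(2)[unfolded dx Dx], of "\<lambda>w. lk w (SG 1)"] by (simp add: lookup_add)
  define c0 where "c0 = lk (D (Gb 0)) (SL 0)"
  define a1 where "a1 = lk (D (Lb 1)) (SL 1)"
  note d = der_deg0[OF D(1)]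
  have eL': "t * lk (\<Delta> (Gb 1)) (SL 1) = a1 + t * c0" using eL d by (simp add: a1_def c0_def)
  have eG': "t * lk (\<Delta> (Gb 1)) (SG 1) = - c0 / 4 + t * a1" using eG d by (simp add: a1_def c0_def)
  have "t * (t * lk (\<Delta> (Gb 1)) (SL 1)) = t * a1 + t^2 * c0" using eL' by (simp add: algebra_simps power2_eq_square)
  also have "\<dots> = t * lk (\<Delta> (Gb 1)) (SG 1)" using eG' t by (simp add: algebra_simps)
  finally have "t * (t * lk (\<Delta> (Gb 1)) (SL 1) - lk (\<Delta> (Gb 1)) (SG 1)) = 0" by (simp add: algebra_simps)
  moreover have "t \<noteq> 0" using t by auto
  ultimately show ?thesis by simp
qed

lemma factC1: assumes ld: "local_derivation \<Delta>" and L1: "\<Delta> (Lb 1) = 0"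
  shows "lk (\<Delta> (Gb 1)) (SL 1) = 0"
proof -
  have t2: "(\<i>/2)^2 = (-1/4 :: complex)" "(-\<i>/2)^2 = (-1/4 :: complex)" by (simp_all add: power2_eq_square)
  have a: "\<i>/2 * lk (\<Delta> (Gb 1)) (SL 1) = lk (\<Delta> (Gb 1)) (SG 1)" by (rule factC1a[OF ld L1 t2(1)])
  have b: "-\<i>/2 * lk (\<Delta> (Gb 1)) (SL 1) = lk (\<Delta> (Gb 1)) (SG 1)" by (rule factC1a[OF ld L1 t2(2)])
  have "\<i> * lk (\<Delta> (Gb 1)) (SL 1) = 0" using a b by (simp add: algebra_simps field_simps)
  then show ?thesis by simp
qed

lemma factB: assumes ld: "local_derivation \<Delta>" shows "lk (\<Delta> (Gb 0)) (SG 0) = 0"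
proof -
  obtain D where D: "is_derivation D" "\<Delta> (Gb 0) = D (Gb 0)" using ld_loc[OF ld] by blast
  show ?thesis using der_deg0(1)[OF D(1)] D(2) by simp
qed

lemma chain_up: fixes g :: "int \<Rightarrow> complex"
  assumes fin: "finite {k. g k \<noteq> 0}" and step: "\<And>k. k \<ge> a \<Longrightarrow> g k \<noteq> 0 \<Longrightarrow> g (k+1) \<noteq> 0" and k: "k \<ge> a"
  shows "g k = 0"
proof (rule ccontr)
  assume "g k \<noteq> 0"
  have "\<forall>j. j \<ge> k \<longrightarrow> g j \<noteq> 0"
  proof (intro allI impI)
    fix j assume "j \<ge> k"
    then show "g j \<noteq> 0"
    proof (induction j rule: int_ge_induct)
      case base then show ?case using \<open>g k \<noteq> 0\<close> .
    next
      case (step i) then show ?case using assms(2)[of i] k by simp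
    qed
  qed
  then have "{k..} \<subseteq> {k. g k \<noteq> 0}" by auto
  then have "finite {k..}" using fin finite_subset by blast
  then show False using infinite_Ici by blast
qed

lemma chain_down: fixes g :: "int \<Rightarrow> complex"
  assumes fin: "finite {k. g k \<noteq> 0}" and step: "\<And>k. k \<le> a \<Longrightarrow> g k \<noteq> 0 \<Longrightarrow> g (k-1) \<noteq> 0" and k: "k \<le> a"
  shows "g k = 0"
proof -
  have "finite {k. g (-k) \<noteq> 0}"
  proof -
    have "{k. g (-k) \<noteq> 0} = uminus ` {k. g k \<noteq> 0}" by (auto simp: image_iff intro!: exI[of _ "- _"])
    then show ?thesis using fin by simp
  qed
  moreover have "\<And>j. j \<ge> -a \<Longrightarrow> g (-j) \<noteq> 0 \<Longrightarrow> g (-(j+1)) \<noteq> 0" using step by (simp add: algebra_simps)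
  ultimately have "g (-(-k)) = 0" using chain_up[of "\<lambda>j. g (-j)" "-a" "-k"] k by simp
  then show ?thesis by simp
qed


lemma factD: assumes ld: "local_derivation \<Delta>" and L0: "\<Delta> (Lb 0) = 0" and L1: "\<Delta> (Lb 1) = 0" and s: "s \<noteq> 0"
  shows "s * lk (\<Delta> (Gb 1)) (SL 2) = lk (\<Delta> (Gb 1)) (SL 3) - s^2 * lk (\<Delta> (Gb 0)) (SL 0)"
proof -
  define x where "x = Gb 0 + ssmul s (Gb 1)"
  obtain D where D: "is_derivation D" "\<Delta> x = D x" using ld_loc[OF ld] by blast
  have dx: "D x = D (Gb 0) + ssmul s (D (Gb 1))" by (simp add: x_def der_add[OF D(1)] der_smul[OF D(1)])
  have Dx: "\<Delta> x = \<Delta> (Gb 0) + ssmul s (\<Delta> (Gb 1))" by (simp add: x_def ld_add[OF ld] ld_smul[OF ld])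
  define v where "v = D (Lb 0)"
  define g where "g k = 2 * lk v (SG k) / of_int k" for k
  define zL where "zL n = lk (\<Delta> (Gb 0)) (SL n)" for n
  define yL where "yL n = lk (\<Delta> (Gb 1)) (SL n)" for n
  define p where "p = zL 0"
  have E: "zL n + s * yL n = lk (D (Gb 0)) (SL n) + s * lk (D (Gb 1)) (SL n)" for n
    using arg_cong[OF D(2)[unfolded dx Dx], of "\<lambda>w. lk w (SL n)"] by (simp add: lookup_add zL_def yL_def)
  have h0: "lk (D (Gb 0)) (SL n) = g n" if "n \<noteq> 0" for n
  proof -
    have "of_int n * lk (D (Gb 0)) (SL n) = lk v (SG n) * 2"
      using der_L0[OF D(1), of "Gb 0" 0 "SL n" n] by (simp add: cf v_def)
    then show ?thesis using that by (simp add: g_def field_simps)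
  qed
  have h1: "lk (D (Gb 1)) (SL n) = g (n - 1)" if "n \<noteq> 1" for n
  proof -
    have "(of_int n - 1) * lk (D (Gb 1)) (SL n) = lk v (SG (n - 1)) * 2"
      using der_L0[OF D(1), of "Gb 1" 1 "SL n" n] by (simp add: cf v_def)
    moreover have "(of_int n - 1 :: complex) \<noteq> 0" using that by simp
    ultimately show ?thesis by (simp add: g_def field_simps)
  qed
  have zA: "zL n = 0" if "n \<noteq> 0" for n using factA2[OF ld L0 that] by (simp add: zL_def)
  have yC: "yL n = 0" if "n \<noteq> 2" "n \<noteq> 3" for n
    using factC2[OF ld L1, of n] factC1[OF ld L1] that by (cases "n = 1") (auto simp: yL_def)
  have Eg: "0 = g n + s * g (n - 1)" if "n \<noteq> 0" "n \<noteq> 1" "n \<noteq> 2" "n \<noteq> 3" for n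
    using E[of n] zA[of n] yC[of n] h0[of n] h1[of n] that by simp
  have fin: "finite {k. g k \<noteq> 0}"
  proof -
    have "{k. g k \<noteq> 0} \<subseteq> SG -` Poly_Mapping.keys v" by (auto simp: g_def in_keys_iff)
    moreover have "finite (SG -` Poly_Mapping.keys v)" by (rule finite_vimageI) (auto simp: inj_def)
    ultimately show ?thesis using finite_subset by blast
  qed
  have gup: "g k = 0" if "k \<ge> 3" for k
  proof (rule chain_up[OF fin _ that])
    fix k :: int assume "k \<ge> 3" "g k \<noteq> 0"
    then have "0 = g (k+1) + s * g k" using Eg[of "k+1"] by simp
    then show "g (k+1) \<noteq> 0" using \<open>g k \<noteq> 0\<close> s by (auto simp: add_eq_0_iff)
  qed
  have gdown: "g k = 0" if "k \<le> -1" for k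
  proof (rule chain_down[OF fin _ that])
    fix k :: int assume "k \<le> -1" "g k \<noteq> 0"
    then have "0 = g k + s * g (k - 1)" using Eg[of k] by simp
    then show "g (k - 1) \<noteq> 0" using \<open>g k \<noteq> 0\<close> by auto
  qed
  note d = der_deg0[OF D(1)]
  have n0: "p = lk (D (Gb 0)) (SL 0)" using E[of 0] yC[of 0] h1[of 0] gdown[of "-1"] by (simp add: p_def)
  have n1: "0 = g 1 + s * p" using E[of 1] zA[of 1] yC[of 1] h0[of 1] d(2) n0 by simp
  have n2: "s * yL 2 = g 2 + s * g 1" using E[of 2] zA[of 2] h0[of 2] h1[of 2] by simp
  have n3: "s * yL 3 = s * g 2" using E[of 3] zA[of 3] h0[of 3] h1[of 3] gup[of 3] by simp
  have "g 2 = yL 3" using n3 s by simp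
  moreover have "g 1 = - s * p" using n1 by (simp add: algebra_simps eq_neg_iff_add_eq_0)
  ultimately have "s * yL 2 = yL 3 - s^2 * p" using n2 by (simp add: power2_eq_square algebra_simps)
  then show ?thesis by (simp add: yL_def p_def zL_def)
qed

theorem lemma4p1:
  fixes \<Delta> :: "svir \<Rightarrow> svir"
  assumes "local_derivation \<Delta>"
    and "\<Delta> (Lb 0) = 0"
    and "\<Delta> (Lb 1) = 0"
  shows "\<Delta> (Gb 0) = 0"
proof -
  define p where "p = lk (\<Delta> (Gb 0)) (SL 0)"
  define y2 where "y2 = lk (\<Delta> (Gb 1)) (SL 2)"
  define y3 where "y3 = lk (\<Delta> (Gb 1)) (SL 3)"
  have a: "y2 = y3 - p" using factD[OF assms, of 1] by (simp add: p_def y2_def y3_def)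
  have b: "- y2 = y3 - p" using factD[OF assms, of "-1"] by (simp add: p_def y2_def y3_def)
  have c: "2 * y2 = y3 - 4 * p" using factD[OF assms, of 2] by (simp add: p_def y2_def y3_def)
  have "y2 = 0" using a b by (simp add: algebra_simps) 
  then have "p = 0" using a c by simp
  show ?thesis
  proof (rule poly_mapping_eqI)
    fix k show "lk (\<Delta> (Gb 0)) k = lk 0 k"
    proof (cases k)
      case (SL n) then show ?thesis using factA2[OF assms(1,2), of n] \<open>p = 0\<close> by (cases "n = 0") (auto simp: p_def)
    next
      case (SG n) then show ?thesis using factA2[OF assms(1,2), of n] factB[OF assms(1)] by (cases "n = 0") auto
    qed
  qed
qed


end
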